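(* Every finite simple graph $G$ can be embedded in any projective plane of order $q$ with $q\ge v(G)(v(G)-1)/2$.
   Context: $v(G)$ is the number of vertices of $G$. A finite projective plane of order $q$ has $q^2+q+1$ points and lines, $q+1$ points on each line and $q+1$ lines through each point; any two distinct points lie on a unique line and any two lines meet in a unique point. An embedding of a simple graph $G=(V,E)$ into a projective plane is an injective map $\phi$ from $V$ to the points such that the induced map sending an edge $ab$ to the line through $\phi(a),\phi(b)$ is injective on $E$. *)

theory Defs
  imports Main
begin

definition proj_plane :: "'p set \<Rightarrow> 'l set \<Rightarrow> ('p \<Rightarrow> 'l \<Rightarrow> bool) \<Rightarrow> nat \<Rightarrow> bool" where
  "proj_plane P L I q \<longleftrightarrow>
     finite P \<and> finite L \<and>
     card P = q^2 + q + 1 \<and> card L = q^2 + q + 1 \<and>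
     (\<forall>l\<in>L. card {p\<in>P. I p l} = q + 1) \<and>
     (\<forall>p\<in>P. card {l\<in>L. I p l} = q + 1) \<and>
     (\<forall>p\<in>P. \<forall>p'\<in>P. p \<noteq> p' \<longrightarrow> (\<exists>!l. l \<in> L \<and> I p l \<and> I p' l)) \<and>
     (\<forall>l\<in>L. \<forall>l'\<in>L. l \<noteq> l' \<longrightarrow> (\<exists>!p. p \<in> P \<and> I p l \<and> I p l'))"

definition line_through :: "'p set \<Rightarrow> 'l set \<Rightarrow> ('p \<Rightarrow> 'l \<Rightarrow> bool) \<Rightarrow> 'p \<Rightarrow> 'p \<Rightarrow> 'l" where
  "line_through P L I p p' = (THE l. l \<in> L \<and> I p l \<and> I p' l)"

definition simple_graph :: "'v set \<Rightarrow> 'v set set \<Rightarrow> bool" where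
  "simple_graph V E \<longleftrightarrow> finite V \<and> (\<forall>e\<in>E. e \<subseteq> V \<and> card e = 2)"

definition graph_embedding ::
  "'v set \<Rightarrow> 'v set set \<Rightarrow> 'p set \<Rightarrow> 'l set \<Rightarrow> ('p \<Rightarrow> 'l \<Rightarrow> bool) \<Rightarrow> ('v \<Rightarrow> 'p) \<Rightarrow> bool" where
  "graph_embedding V E P L I \<phi> \<longleftrightarrow>
     \<phi> ` V \<subseteq> P \<and> inj_on \<phi> V \<and>
     (\<forall>a\<in>V. \<forall>b\<in>V. \<forall>c\<in>V. \<forall>d\<in>V.
        {a,b} \<in> E \<longrightarrow> {c,d} \<in> E \<longrightarrow>
        line_through P L I (\<phi> a) (\<phi> b) = line_through P L I (\<phi> c) (\<phi> d) \<longrightarrow>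
        {a,b} = {c,d})"

end

theory Submission
  imports Defs
begin

definition arc :: "'p set \<Rightarrow> 'l set \<Rightarrow> ('p \<Rightarrow> 'l \<Rightarrow> bool) \<Rightarrow> 'p set \<Rightarrow> bool" where
  "arc P L I S \<longleftrightarrow> S \<subseteq> P \<and> (\<forall>l\<in>L. card {p\<in>S. I p l} \<le> 2)"

lemma line_through_props:
  assumes "proj_plane P L I q" "p \<in> P" "p' \<in> P" "p \<noteq> p'"
  shows "line_through P L I p p' \<in> L \<and> I p (line_through P L I p p') \<and> I p' (line_through P L I p p')"
proof -
  have "\<exists>!l. l \<in> L \<and> I p l \<and> I p' l" using assms unfolding proj_plane_def by blast
  from theI'[OF this] show ?thesis unfolding line_through_def by blast
qed

lemma arith_bound:
  fixes k n q c :: nat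
  assumes "k < n" "n * (n - 1) \<le> 2 * q" "2 * c = k * (k - 1)"
  shows "k + c * (q + 1) < q^2 + q + 1"
proof -
  obtain m where m: "n = Suc m" using assms(1) by (cases n) auto
  have "k * (k - 1) \<le> m * (m - 1)" using assms(1) m by (intro mult_le_mono) auto
  moreover have "m * (m - 1) + 2 * m = Suc m * m" by (cases m) (auto simp: algebra_simps)
  ultimately have "2 * c + 2 * m \<le> 2 * q" using assms m by simp
  hence ck: "c + k \<le> q" using assms(1) m by linarith
  hence "(c + k) * (q + 1) \<le> q * (q + 1)" by (rule mult_le_mono1)
  moreover have "k \<le> k * (q + 1)" by simp
  ultimately have "k + c * (q + 1) \<le> q * (q + 1)" by (simp add: algebra_simps)
  thus ?thesis by (simp add: power2_eq_square algebra_simps)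
qed


lemma two_pts_same_line:
  assumes pp: "proj_plane P L I q" and "l \<in> L" "l' \<in> L"
    and "x \<in> P" "y \<in> P" "x \<noteq> y" "I x l" "I y l" "I x l'" "I y l'"
  shows "l = l'"
  using assms unfolding proj_plane_def by blast

lemma card2_ex:
  assumes "finite A" "2 \<le> card A"
  shows "\<exists>x y. x \<in> A \<and> y \<in> A \<and> x \<noteq> y"
proof -
  obtain x where "x \<in> A" using assms by fastforce
  moreover have "card (A - {x}) \<ge> 1" using assms \<open>x \<in> A\<close> by simp
  then obtain y where "y \<in> A - {x}" by (metis card.empty ex_in_conv not_one_le_zero)
  ultimately show ?thesis by blast
qed

lemma arc_extend:
  assumes pp: "proj_plane P L I q" and ar: "arc P L I S" and ck: "card S = k"
    and kn: "k < n" and nq: "n * (n - 1) \<le> 2 * q"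
  shows "\<exists>p\<in>P - S. arc P L I (insert p S)"
proof -
  have fP: "finite P" and fL: "finite L" and cP: "card P = q^2 + q + 1"
    and cl: "\<forall>l\<in>L. card {p\<in>P. I p l} = q + 1"
    using pp unfolding proj_plane_def by auto
  have SP: "S \<subseteq> P" and S2: "\<forall>l\<in>L. card {p\<in>S. I p l} \<le> 2" using ar unfolding arc_def by auto
  have fS: "finite S" using SP fP finite_subset by blast
  define Lk where "Lk = {l\<in>L. 2 \<le> card {p\<in>S. I p l}}"
  define B where "B = S \<union> (\<Union>l\<in>Lk. {p\<in>P. I p l})"
  define T where "T = {e. e \<subseteq> S \<and> card e = 2}"
  have inj: "inj_on (\<lambda>l. {p\<in>S. I p l}) Lk"
  proof (rule inj_onI)
    fix l l' assume l: "l \<in> Lk" and l': "l' \<in> Lk" and eq: "{p\<in>S. I p l} = {p\<in>S. I p l'}"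
    have "finite {p\<in>S. I p l}" using fS by simp
    with l obtain x y where "x \<in> {p\<in>S. I p l}" "y \<in> {p\<in>S. I p l}" "x \<noteq> y"
      unfolding Lk_def using card2_ex by blast
    with eq have "x \<in> {p\<in>S. I p l'}" "y \<in> {p\<in>S. I p l'}" by auto
    then show "l = l'" using two_pts_same_line[OF pp, of l l' x y] l l' SP
      \<open>x \<in> {p\<in>S. I p l}\<close> \<open>y \<in> {p\<in>S. I p l}\<close> \<open>x \<noteq> y\<close> unfolding Lk_def by auto
  qed
  have img: "(\<lambda>l. {p\<in>S. I p l}) ` Lk \<subseteq> T"
    unfolding T_def Lk_def using S2 by (auto intro: antisym)
  have fT: "finite T" unfolding T_def using fS by simp
  have "card Lk = card ((\<lambda>l. {p\<in>S. I p l}) ` Lk)" using card_image[OF inj] by simp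
  also have "\<dots> \<le> card T" using card_mono[OF fT img] .
  also have "card T = k choose 2" unfolding T_def using n_subsets[OF fS, of 2] ck by simp
  finally have cLk: "card Lk \<le> k choose 2" .
  have fLk: "finite Lk" unfolding Lk_def using fL by simp
  have "card B \<le> card S + card (\<Union>l\<in>Lk. {p\<in>P. I p l})" unfolding B_def by (rule card_Un_le)
  also have "card (\<Union>l\<in>Lk. {p\<in>P. I p l}) \<le> (\<Sum>l\<in>Lk. card {p\<in>P. I p l})"
    by (rule card_UN_le[OF fLk])
  also have "(\<Sum>l\<in>Lk. card {p\<in>P. I p l}) = card Lk * (q + 1)"
    using cl unfolding Lk_def by simp
  also have "card Lk * (q + 1) \<le> (k choose 2) * (q + 1)" using cLk by (rule mult_le_mono1)
  finally have cB: "card B \<le> k + (k choose 2) * (q + 1)" using ck by simp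
  have ev: "even (k * (k - 1))" by (cases k) auto
  have "2 * (k choose 2) = k * (k - 1)" using ev by (simp add: choose_two)
  from arith_bound[OF kn nq this] cB cP have "card B < card P" by simp
  moreover have "finite B" unfolding B_def using fS fLk fP by auto
  ultimately have "\<not> P \<subseteq> B" using card_mono[of B P] by linarith
  then obtain p where p: "p \<in> P" "p \<notin> B" by blast
  have "arc P L I (insert p S)"
    unfolding arc_def
  proof (intro conjI ballI)
    show "insert p S \<subseteq> P" using p SP by auto
    fix l assume l: "l \<in> L"
    show "card {x\<in>insert p S. I x l} \<le> 2"
    proof (cases "I p l")
      case False
      hence "{x\<in>insert p S. I x l} = {x\<in>S. I x l}" by auto
      thus ?thesis using S2 l by simp
    next
      case True
      have "l \<notin> Lk" using p True l unfolding B_def by auto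
      hence "card {x\<in>S. I x l} \<le> 1" using l unfolding Lk_def by auto
      moreover have "{x\<in>insert p S. I x l} = insert p {x\<in>S. I x l}" using True by auto
      moreover have "finite {x\<in>S. I x l}" using fS by simp
      ultimately show ?thesis using card_insert_le_m1 by (simp add: card_insert_if)
    qed
  qed
  moreover have "p \<notin> S" using p unfolding B_def by auto
  ultimately show ?thesis using p by blast
qed

lemma arc_exists:
  assumes pp: "proj_plane P L I q" and nq: "n * (n - 1) \<le> 2 * q"
  shows "k \<le> n \<Longrightarrow> \<exists>S. arc P L I S \<and> card S = k"
proof (induction k)
  case 0
  show ?case by (rule exI[of _ "{}"]) (simp add: arc_def)
next
  case (Suc k)
  then obtain S where S: "arc P L I S" "card S = k" by auto
  have "k < n" using Suc.prems by simp
  from arc_extend[OF pp S this nq] obtain p where p: "p \<in> P - S" "arc P L I (insert p S)"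
    by blast
  have "finite P" using pp unfolding proj_plane_def by simp
  moreover have "S \<subseteq> P" using S(1) unfolding arc_def by simp
  ultimately have "finite S" using finite_subset by blast
  hence "card (insert p S) = Suc k" using p S by simp
  with p show ?case by blast
qed

theorem corollary2p16:
  fixes V :: "'v set" and E :: "'v set set"
    and P :: "'p set" and L :: "'l set" and I :: "'p \<Rightarrow> 'l \<Rightarrow> bool" and q :: nat
  assumes "simple_graph V E"
    and "proj_plane P L I q"
    and "2 * q \<ge> card V * (card V - 1)"
  shows "\<exists>\<phi>. graph_embedding V E P L I \<phi>"
proof -
  have fV: "finite V" using assms(1) unfolding simple_graph_def by simp
  obtain S where S: "arc P L I S" "card S = card V"
    using arc_exists[OF assms(2) assms(3)] by auto
  have SP: "S \<subseteq> P" and S2: "\<forall>l\<in>L. card {p\<in>S. I p l} \<le> 2" using S(1) unfolding arc_def by auto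
  have "finite P" using assms(2) unfolding proj_plane_def by simp
  hence fS: "finite S" using SP finite_subset by blast
  obtain \<phi> where bij: "bij_betw \<phi> V S" using finite_same_card_bij[OF fV fS] S(2) by auto
  have injp: "inj_on \<phi> V" and imp: "\<phi> ` V = S" using bij unfolding bij_betw_def by auto
  have "graph_embedding V E P L I \<phi>"
    unfolding graph_embedding_def
  proof (intro conjI ballI impI)
    show "\<phi> ` V \<subseteq> P" using imp SP by simp
    show "inj_on \<phi> V" by (rule injp)
    fix a b c d assume abcd: "a \<in> V" "b \<in> V" "c \<in> V" "d \<in> V"
      and eab: "{a,b} \<in> E" and ecd: "{c,d} \<in> E"
      and eq: "line_through P L I (\<phi> a) (\<phi> b) = line_through P L I (\<phi> c) (\<phi> d)"
    have "card {a,b} = 2" "card {c,d} = 2" using assms(1) eab ecd unfolding simple_graph_def by auto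
    hence ab: "a \<noteq> b" and cd: "c \<noteq> d" by auto
    have pab: "\<phi> a \<noteq> \<phi> b" "\<phi> c \<noteq> \<phi> d"
      using inj_onD[OF injp _ abcd(1) abcd(2)] inj_onD[OF injp _ abcd(3) abcd(4)] ab cd by blast+
    define l where "l = line_through P L I (\<phi> a) (\<phi> b)"
    have inP: "\<phi> a \<in> P" "\<phi> b \<in> P" "\<phi> c \<in> P" "\<phi> d \<in> P" using abcd imp SP by auto
    have l1: "l \<in> L" "I (\<phi> a) l" "I (\<phi> b) l"
      using line_through_props[OF assms(2) inP(1,2) pab(1)] unfolding l_def by auto
    have l2: "I (\<phi> c) l" "I (\<phi> d) l"
      using line_through_props[OF assms(2) inP(3,4) pab(2)] eq unfolding l_def by auto
    show "{a,b} = {c,d}"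
    proof (rule ccontr)
      assume ne: "{a,b} \<noteq> {c,d}"
      have "\<exists>x\<in>{c,d}. x \<notin> {a,b}"
      proof (rule ccontr)
        assume "\<not> ?thesis"
        hence "{c,d} \<subseteq> {a,b}" by auto
        hence "{c,d} = {a,b}" using card_subset_eq[of "{a,b}" "{c,d}"] \<open>card {a,b} = 2\<close> \<open>card {c,d} = 2\<close> by auto
        with ne show False by simp
      qed
      then obtain x where x: "x \<in> {c,d}" "x \<notin> {a,b}" by blast
      have xV: "x \<in> V" using x abcd by auto
      have "\<phi> x \<noteq> \<phi> a" "\<phi> x \<noteq> \<phi> b"
        using inj_onD[OF injp _ xV abcd(1)] inj_onD[OF injp _ xV abcd(2)] x by blast+
      moreover have "I (\<phi> x) l" using x l2 by auto
      ultimately have sub: "{\<phi> a, \<phi> b, \<phi> x} \<subseteq> {p\<in>S. I p l}" using l1 imp abcd xV by auto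
      have "card {\<phi> a, \<phi> b, \<phi> x} = 3" using pab(1) \<open>\<phi> x \<noteq> \<phi> a\<close> \<open>\<phi> x \<noteq> \<phi> b\<close> by auto
      moreover have "card {\<phi> a, \<phi> b, \<phi> x} \<le> card {p\<in>S. I p l}"
        using card_mono[OF _ sub] fS by simp
      moreover have "card {p\<in>S. I p l} \<le> 2" using S2 l1(1) by blast
      ultimately show False by linarith
    qed
  qed
  thus ?thesis by blast
qed

end
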